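(* Let $0<\theta<1$ be irrational, $\lambda=e^{2\pi i\theta}$, and $0\le m<n$ integers. Then for any $\epsilon>0$ there is $s$ with $0<|s|<1$ such that for every $g\in Z^\lambda_{m,n}$ there exists $\tilde g\in Z^s_{m,n}$ with $\sup_{z\in\widehat{\mathbb C}}d_{S^2}(\tilde g(z),g(z))<\epsilon$, where $d_{S^2}$ is the spherical metric.
   Context: $Z^s_{m,n}$ is the set of quadratic rational maps $g$ with critical points $1$ and $c$ (i.e. $g'(1)=g'(c)=0$), $g^m(c)=g^n(c)$, $g(0)=0$, $g(\infty)=\infty$, and $g'(0)=s$. *)

theory Defs
  imports "HOL-Analysis.Analysis" "HOL-Computational_Algebra.Polynomial"
begin

text \<open>The Riemann sphere: None is the point at infinity.\<close>
type_synonym sphere = "complex option"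

definition rat_map :: "complex poly \<Rightarrow> complex poly \<Rightarrow> sphere \<Rightarrow> sphere" where
  "rat_map p q w = (case w of
      Some z \<Rightarrow> (if poly q z = 0 then None else Some (poly p z / poly q z))
    | None \<Rightarrow> (if degree p > degree q then None
               else Some (if degree p = degree q then lead_coeff p / lead_coeff q else 0)))"

definition quad_rat :: "(sphere \<Rightarrow> sphere) \<Rightarrow> bool" where
  "quad_rat g \<longleftrightarrow> (\<exists>p q. coprime p q \<and> max (degree p) (degree q) = 2 \<and> g = rat_map p q)"

definition chart_at :: "sphere \<Rightarrow> sphere \<Rightarrow> complex" where
  "chart_at a w = (case a of
      None \<Rightarrow> (case w of None \<Rightarrow> 0 | Some u \<Rightarrow> inverse u)
    | Some _ \<Rightarrow> (case w of None \<Rightarrow> 0 | Some u \<Rightarrow> u))"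

definition inv_chart_at :: "sphere \<Rightarrow> complex \<Rightarrow> sphere" where
  "inv_chart_at a x = (case a of
      None \<Rightarrow> (if x = 0 then None else Some (inverse x))
    | Some _ \<Rightarrow> Some x)"

text \<open>g has derivative D at the point z of the sphere, computed in the standard local
  coordinates at z and at g z.  Critical point: derivative 0.\<close>
definition sphere_deriv :: "(sphere \<Rightarrow> sphere) \<Rightarrow> sphere \<Rightarrow> complex \<Rightarrow> bool" where
  "sphere_deriv g z D \<longleftrightarrow>
     ((\<lambda>x. chart_at (g z) (g (inv_chart_at z x))) has_field_derivative D) (at (chart_at z z))"

text \<open>Spherical (chordal) metric on the Riemann sphere, viewed as the unit sphere.\<close>
definition sdist :: "sphere \<Rightarrow> sphere \<Rightarrow> real" where
  "sdist a b = (case (a, b) of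
      (None, None) \<Rightarrow> 0
    | (Some z, None) \<Rightarrow> 2 / sqrt (1 + (cmod z)\<^sup>2)
    | (None, Some w) \<Rightarrow> 2 / sqrt (1 + (cmod w)\<^sup>2)
    | (Some z, Some w) \<Rightarrow> 2 * cmod (z - w) / sqrt ((1 + (cmod z)\<^sup>2) * (1 + (cmod w)\<^sup>2)))"

definition Z :: "complex \<Rightarrow> nat \<Rightarrow> nat \<Rightarrow> (sphere \<Rightarrow> sphere) set" where
  "Z s m n = {g. quad_rat g
      \<and> sphere_deriv g (Some 1) 0
      \<and> (\<exists>c. c \<noteq> Some 1 \<and> sphere_deriv g c 0 \<and> (g ^^ m) c = (g ^^ n) c)
      \<and> g (Some 0) = Some 0 \<and> g None = None
      \<and> sphere_deriv g (Some 0) s}"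

end

theory Submission
  imports Defs "HOL-Computational_Algebra.Fundamental_Theorem_Algebra"
begin


lemma poly_sum_le:
  fixes p :: "complex poly"
  assumes "degree p \<le> D"
  shows "poly p x = (\<Sum>i\<le>D. coeff p i * x ^ i)"
proof -
  have "poly p x = (\<Sum>i\<le>degree p. coeff p i * x ^ i)" by (rule poly_altdef)
  also have "\<dots> = (\<Sum>i\<le>D. coeff p i * x ^ i)"
    by (rule sum.mono_neutral_left) (use assms in \<open>auto simp: coeff_eq_0\<close>)
  finally show ?thesis .
qed

lemma root_cont:
  fixes F :: "complex \<Rightarrow> complex poly"
  assumes cont: "\<And>i. isCont (\<lambda>s. coeff (F s) i) s0"
    and deg: "\<And>s. degree (F s) \<le> D"
    and nz: "F s0 \<noteq> 0" and rt: "poly (F s0) z0 = 0" and e: "e > 0"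
  shows "\<exists>d>0. \<forall>s. cmod (s - s0) < d \<longrightarrow> (\<exists>z. cmod (z - z0) < e \<and> poly (F s) z = 0)"
proof -
  have pc: "isCont (\<lambda>s. poly (F s) x) s0" for x
  proof -
    have "(\<lambda>s. poly (F s) x) = (\<lambda>s. \<Sum>i\<le>D. coeff (F s) i * x ^ i)"
      using poly_sum_le[OF deg] by auto
    moreover have "isCont (\<lambda>s. \<Sum>i\<le>D. coeff (F s) i * x ^ i) s0"
      by (intro continuous_intros cont)
    ultimately show ?thesis by simp
  qed
  define f where "f = (\<lambda>k::nat. z0 + of_real (e / (2 * (real k + 1))))"
  have "inj f" unfolding f_def inj_def using e by (auto simp: field_simps)
  hence "infinite (range f)" using finite_imageD by blast
  moreover have "finite {x. poly (F s0) x = 0}" using poly_roots_finite[OF nz] .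
  ultimately obtain k where k: "poly (F s0) (f k) \<noteq> 0"
    by (metis (mono_tags, lifting) finite_subset mem_Collect_eq rangeE subsetI)
  define z1 where "z1 = f k"
  have z1: "cmod (z1 - z0) \<le> e/2"
  proof -
    have "z1 - z0 = complex_of_real (e / (2 * (real k + 1)))" unfolding z1_def f_def by simp
    hence "cmod (z1 - z0) = \<bar>e / (2 * (real k + 1))\<bar>" by (simp only: norm_of_real)
    also have "\<dots> = e / (2 * (real k + 1))" using e by simp
    also have "\<dots> \<le> e/2" using e by (simp add: field_simps)
    finally show ?thesis .
  qed
  define A where "A = cmod (poly (F s0) z1)"
  have A: "A > 0" using k unfolding A_def z1_def by simp
  define K where "K = (3/2::real) ^ D"
  have K: "K > 0" unfolding K_def by simp
  obtain d1 where d1: "d1 > 0" "\<forall>s. cmod (s - s0) < d1 \<longrightarrow> cmod (poly (F s) z1 - poly (F s0) z1) < A/2"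
    using pc[of z1] A unfolding isCont_def LIM_eq
    by (metis dist_norm half_gt_zero dist_self norm_eq_zero right_minus_eq)
  obtain d2 where d2: "d2 > 0" "\<forall>s. cmod (s - s0) < d2 \<longrightarrow> cmod (poly (F s) z0 - poly (F s0) z0) < A/(2*K)"
    using pc[of z0] A K unfolding isCont_def LIM_eq
    by (metis divide_pos_pos mult_pos_pos zero_less_numeral dist_norm dist_self norm_eq_zero right_minus_eq)
  show ?thesis
  proof (intro exI[of _ "min d1 d2"] conjI allI impI)
    show "min d1 d2 > 0" using d1 d2 by simp
    fix s assume s: "cmod (s - s0) < min d1 d2"
    show "\<exists>z. cmod (z - z0) < e \<and> poly (F s) z = 0"
    proof (rule ccontr)
      assume nr: "\<not> ?thesis"
      have b1: "cmod (poly (F s) z1) > A/2"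
      proof -
        have "cmod (poly (F s) z1 - poly (F s0) z1) < A/2" using d1 s by auto
        hence "A - cmod (poly (F s) z1) < A/2" unfolding A_def
          by (smt (verit) norm_triangle_ineq2 norm_minus_commute)
        thus ?thesis by simp
      qed
      have b2: "cmod (poly (F s) z0) < A/(2*K)" using d2 s rt by auto
      have Fnz: "F s \<noteq> 0" using nr e by (metis norm_zero poly_0 right_minus_eq)
      obtain r where r: "smult (lead_coeff (F s)) (\<Prod>i<degree (F s). [:-r i, 1:]) = F s"
        using complex_poly_decompose' by blast
      have pe: "poly (F s) x = lead_coeff (F s) * (\<Prod>i<degree (F s). x - r i)" for x
        by (subst r[symmetric]) (simp add: poly_prod)
      have rr: "cmod (r i - z0) \<ge> e" if "i < degree (F s)" for i
      proof -
        have "poly (F s) (r i) = 0" unfolding pe using that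
          by (auto intro!: prod_zero)
        thus ?thesis using nr by force
      qed
      have "cmod (poly (F s) z1) = cmod (lead_coeff (F s)) * (\<Prod>i<degree (F s). cmod (z1 - r i))"
        unfolding pe by (simp add: norm_mult prod_norm)
      also have "\<dots> \<le> cmod (lead_coeff (F s)) * (\<Prod>i<degree (F s). 3/2 * cmod (z0 - r i))"
      proof (intro mult_left_mono prod_mono conjI)
        fix i assume i: "i \<in> {..<degree (F s)}"
        have "cmod (z1 - r i) \<le> cmod (z1 - z0) + cmod (z0 - r i)"
          by (metis diff_add_cancel norm_triangle_ineq add.commute diff_diff_add)
        also have "\<dots> \<le> e/2 + cmod (z0 - r i)" using z1 by simp
        also have "\<dots> \<le> 3/2 * cmod (z0 - r i)" using rr[of i] i
          by (simp add: norm_minus_commute)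
        finally show "cmod (z1 - r i) \<le> 3/2 * cmod (z0 - r i)" .
      qed auto
      also have "\<dots> = (3/2) ^ degree (F s) * cmod (poly (F s) z0)"
      proof -
        have "(\<Prod>i<degree (F s). 3/2 * cmod (z0 - r i)) = (\<Prod>i<degree (F s). (3/2::real)) * (\<Prod>i<degree (F s). cmod (z0 - r i))"
          by (rule prod.distrib)
        thus ?thesis unfolding pe by (simp add: norm_mult prod_norm)
      qed
      also have "\<dots> \<le> K * cmod (poly (F s) z0)"
        unfolding K_def by (intro mult_right_mono power_increasing deg) auto
      also have "\<dots> < K * (A/(2*K))" using b2 K by (intro mult_strict_left_mono) auto
      also have "\<dots> = A/2" using K by simp
      finally show False using b1 by simp
    qed
  qed
qed



definition GG :: "'a::comm_ring_1 \<Rightarrow> 'a \<Rightarrow> 'a \<times> 'a \<Rightarrow> 'a \<times> 'a" where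
  "GG s g v = (s * fst v * ((g + 2) * snd v - fst v), (g + 2) * snd v * (snd v + g * fst v))"
definition cpt :: "'a::comm_ring_1 \<Rightarrow> 'a \<times> 'a" where "cpt g = (- (g + 2), g)"
definition orb :: "'a::comm_ring_1 \<Rightarrow> 'a \<Rightarrow> nat \<Rightarrow> 'a \<times> 'a" where
  "orb s g k = (GG s g ^^ k) (cpt g)"
definition cr :: "'a::comm_ring_1 \<times> 'a \<Rightarrow> 'a \<times> 'a \<Rightarrow> 'a" where
  "cr u w = fst u * snd w - fst w * snd u"
definition PP :: "nat \<Rightarrow> nat \<Rightarrow> 'a::comm_ring_1 \<Rightarrow> 'a \<Rightarrow> 'a" where
  "PP m n s g = cr (orb s g m) (orb s g n)"

lemma orb_Suc: "orb s g (Suc k) = GG s g (orb s g k)"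
  unfolding orb_def by simp
lemma orb_0: "orb s g 0 = cpt g" unfolding orb_def by simp

lemma orb_hom: "map_prod (\<lambda>p. poly p x) (\<lambda>p. poly p x) (orb [:s:] [:0,1:] k) = orb s x k"
proof (induction k)
  case 0 then show ?case by (simp add: orb_0 cpt_def)
next
  case (Suc k)
  obtain a b where ab: "orb [:s:] [:0,1:] k = (a,b)" by fastforce
  from Suc ab have e: "orb s x k = (poly a x, poly b x)" by simp
  show ?case using ab e by (simp add: orb_Suc GG_def)
qed

lemma PP_hom: "poly (PP m n [:s:] [:0,1:]) x = PP m n s x"
proof -
  have m: "map_prod (\<lambda>p. poly p x) (\<lambda>p. poly p x) (orb [:s:] [:0,1:] m) = orb s x m" by (rule orb_hom)
  have n: "map_prod (\<lambda>p. poly p x) (\<lambda>p. poly p x) (orb [:s:] [:0,1:] n) = orb s x n" by (rule orb_hom)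
  obtain a b where ab: "orb [:s:] [:0,1:] m = (a,b)" by fastforce
  obtain c d where cd: "orb [:s:] [:0,1:] n = (c,d)" by fastforce
  have m': "orb s x m = (poly a x, poly b x)" using m ab by simp
  have n': "orb s x n = (poly c x, poly d x)" using n cd by simp
  show ?thesis using ab cd m' n' unfolding PP_def cr_def by simp
qed

definition CC :: "(complex \<Rightarrow> complex poly) \<Rightarrow> bool" where
  "CC F \<longleftrightarrow> (\<forall>i. continuous_on UNIV (\<lambda>s. coeff (F s) i)) \<and> (\<exists>D. \<forall>s. degree (F s) \<le> D)"

lemma CC_const: "CC (\<lambda>s. c)" unfolding CC_def by auto
lemma CC_var: "CC (\<lambda>s. [:s:])"
  unfolding CC_def
proof (intro conjI allI exI)
  fix i show "continuous_on UNIV (\<lambda>s. coeff [:s:] i)"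
    by (cases i) (auto intro: continuous_intros)
qed auto
lemma CC_add: "CC F \<Longrightarrow> CC G \<Longrightarrow> CC (\<lambda>s. F s + G s)"
  unfolding CC_def
proof (elim conjE exE, intro conjI allI)
  fix D1 D2 assume d1: "\<forall>s. degree (F s) \<le> D1" and d2: "\<forall>s. degree (G s) \<le> D2"
  assume c1: "\<forall>i. continuous_on UNIV (\<lambda>s. coeff (F s) i)" and c2: "\<forall>i. continuous_on UNIV (\<lambda>s. coeff (G s) i)"
  fix i show "continuous_on UNIV (\<lambda>s. coeff (F s + G s) i)"
    using c1 c2 by (auto intro!: continuous_intros)
  show "\<exists>D. \<forall>s. degree (F s + G s) \<le> D"
    using d1 d2 by (intro exI[of _ "max D1 D2"]) (meson degree_add_le le_max_iff_disj)
qed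
lemma CC_uminus: "CC F \<Longrightarrow> CC (\<lambda>s. - F s)"
  unfolding CC_def by (auto intro!: continuous_intros)
lemma CC_diff: "CC F \<Longrightarrow> CC G \<Longrightarrow> CC (\<lambda>s. F s - G s)"
  using CC_add[of F "\<lambda>s. - G s"] CC_uminus[of G] by simp
lemma CC_mult: "CC F \<Longrightarrow> CC G \<Longrightarrow> CC (\<lambda>s. F s * G s)"
  unfolding CC_def
proof (elim conjE exE, intro conjI allI)
  fix D1 D2 assume d1: "\<forall>s. degree (F s) \<le> D1" and d2: "\<forall>s. degree (G s) \<le> D2"
  assume c1: "\<forall>i. continuous_on UNIV (\<lambda>s. coeff (F s) i)" and c2: "\<forall>i. continuous_on UNIV (\<lambda>s. coeff (G s) i)"
  fix i show "continuous_on UNIV (\<lambda>s. coeff (F s * G s) i)"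
    unfolding coeff_mult using c1 c2 by (auto intro!: continuous_intros)
  show "\<exists>D. \<forall>s. degree (F s * G s) \<le> D"
    using d1 d2 by (intro exI[of _ "D1 + D2"]) (meson add_mono degree_mult_le order_trans)
qed

lemma CC_orb: "CC (\<lambda>s. fst (orb [:s:] [:0,1:] k)) \<and> CC (\<lambda>s. snd (orb [:s:] [:0,1:] k))"
proof (induction k)
  case 0 then show ?case by (simp add: orb_0 cpt_def CC_const)
next
  case (Suc k)
  then show ?case unfolding orb_Suc GG_def fst_conv snd_conv
    by (intro conjI CC_mult CC_add CC_diff CC_var CC_const) auto
qed

lemma CC_PP: "CC (\<lambda>s. PP m n [:s:] [:0,1:])"
  unfolding PP_def cr_def using CC_orb[of m] CC_orb[of n]
  by (intro CC_diff CC_mult) auto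



definition proj :: "complex \<times> complex \<Rightarrow> sphere" where
  "proj v = (if snd v = 0 then None else Some (fst v / snd v))"
definition gm :: "complex \<Rightarrow> complex \<Rightarrow> sphere \<Rightarrow> sphere" where
  "gm s g = rat_map [:0, s, - s / (g + 2):] [:1, g:]"
definition nondeg :: "complex \<Rightarrow> complex \<Rightarrow> bool" where
  "nondeg s g \<longleftrightarrow> s \<noteq> 0 \<and> g \<noteq> -2 \<and> g \<noteq> -1"

lemma nocommon:
  assumes nd: "nondeg s g" and q: "1 + g * z = 0"
  shows "s * z - s / (g + 2) * z^2 \<noteq> 0"
proof
  assume p: "s * z - s / (g + 2) * z^2 = 0"
  have g2: "g + 2 \<noteq> 0" using nd unfolding nondeg_def by (metis add_eq_0_iff2 neg_equal_iff_equal)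
  have z: "z \<noteq> 0" using q by auto
  have "s * z * ((g + 2) - z) = 0" using p g2 by (simp add: field_simps power2_eq_square)
  hence "z = g + 2" using z nd unfolding nondeg_def by auto
  hence "(g + 1)^2 = 0" using q by (simp add: power2_eq_square algebra_simps)
  thus False using nd unfolding nondeg_def by (simp add: add_eq_0_iff2)
qed

lemma gm_None: "nondeg s g \<Longrightarrow> gm s g None = None"
  unfolding gm_def rat_map_def nondeg_def
  by (auto simp: add_eq_0_iff2)

lemma gm_Some: "gm s g (Some z) = (if 1 + g * z = 0 then None else Some ((s * z - s / (g + 2) * z^2) / (1 + g * z)))"
  unfolding gm_def rat_map_def by (simp add: algebra_simps power2_eq_square)

lemma lift:
  assumes nd: "nondeg s g" and v: "v \<noteq> 0"
  shows "gm s g (proj v) = proj (GG s g v) \<and> GG s g v \<noteq> 0"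
proof -
  obtain X Y where XY: "v = (X, Y)" by fastforce
  have g2: "g + 2 \<noteq> 0" using nd unfolding nondeg_def by (metis add_eq_0_iff2 neg_equal_iff_equal)
  have s: "s \<noteq> 0" using nd unfolding nondeg_def by auto
  show ?thesis
  proof (cases "Y = 0")
    case True
    hence X: "X \<noteq> 0" using v XY by (auto simp: zero_prod_def)
    show ?thesis using True X s XY gm_None[OF nd]
      by (auto simp: proj_def GG_def zero_prod_def)
  next
    case False
    define z where "z = X / Y"
    have Xz: "X = z * Y" using False unfolding z_def by simp
    have G1: "fst (GG s g v) = Y^2 * (g + 2) * (s * z - s / (g + 2) * z^2)"
      using g2 unfolding XY GG_def Xz by (simp add: field_simps power2_eq_square)
    have G2: "snd (GG s g v) = Y^2 * (g + 2) * (1 + g * z)"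
      unfolding XY GG_def Xz by (simp add: field_simps power2_eq_square)
    have pv: "proj v = Some z" using False unfolding proj_def XY z_def by simp
    show ?thesis
    proof (cases "1 + g * z = 0")
      case True
      have "fst (GG s g v) \<noteq> 0" unfolding G1 using nocommon[OF nd True] False g2 by simp
      then show ?thesis using True pv G2 by (auto simp: gm_Some proj_def zero_prod_def)
    next
      case F2: False
      have "gm s g (proj v) = Some ((s * z - s / (g + 2) * z^2) / (1 + g * z))"
        using F2 pv by (simp add: gm_Some)
      moreover have "proj (GG s g v) = Some ((s * z - s / (g + 2) * z^2) / (1 + g * z))"
        unfolding proj_def G1 G2 using F2 False g2 by simp
      moreover have "GG s g v \<noteq> 0" using G2 F2 False g2 by (auto simp: zero_prod_def)
      ultimately show ?thesis by simp
    qed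
  qed
qed

lemma lift_iter:
  assumes nd: "nondeg s g" and v: "v \<noteq> 0"
  shows "(gm s g ^^ k) (proj v) = proj ((GG s g ^^ k) v) \<and> (GG s g ^^ k) v \<noteq> 0"
proof (induction k)
  case 0 then show ?case using v by simp
next
  case (Suc k) then show ?case using lift[OF nd, of "(GG s g ^^ k) v"] by simp
qed

lemma proj_eq:
  assumes "u \<noteq> 0" "w \<noteq> 0"
  shows "proj u = proj w \<longleftrightarrow> cr u w = 0"
proof -
  obtain a b where u: "u = (a,b)" by fastforce
  obtain c d where w: "w = (c,d)" by fastforce
  show ?thesis using assms unfolding u w proj_def cr_def
    by (auto simp: zero_prod_def field_simps)
qed

lemma orbit_iff:
  assumes nd: "nondeg s g"
  shows "(gm s g ^^ m) (proj (cpt g)) = (gm s g ^^ n) (proj (cpt g)) \<longleftrightarrow> PP m n s g = 0"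
proof -
  have c: "cpt g \<noteq> 0" using nd unfolding nondeg_def cpt_def zero_prod_def
    by (auto simp: add_eq_0_iff2)
  show ?thesis
    using lift_iter[OF nd c, of m] lift_iter[OF nd c, of n] proj_eq
    unfolding PP_def orb_def by simp
qed



definition L1 :: "complex \<times> complex \<Rightarrow> real" where "L1 v = cmod (fst v) + cmod (snd v)"
definition nm :: "complex \<times> complex \<Rightarrow> real" where "nm v = sqrt ((cmod (fst v))^2 + (cmod (snd v))^2)"

lemma sq1: "a2 \<noteq> 0 \<Longrightarrow> sqrt (1 + (cmod (a1 / a2))\<^sup>2) = nm (a1, a2) / cmod a2"
proof -
  assume a: "a2 \<noteq> 0"
  have "1 + (cmod (a1 / a2))\<^sup>2 = ((cmod a1)^2 + (cmod a2)^2) / (cmod a2)^2"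
    using a by (simp add: norm_divide field_simps power2_eq_square)
  hence "sqrt (1 + (cmod (a1 / a2))\<^sup>2) = sqrt ((cmod a1)^2 + (cmod a2)^2) / sqrt ((cmod a2)^2)"
    by (simp add: real_sqrt_divide)
  thus ?thesis unfolding nm_def by simp
qed

lemma nm_pos: "v \<noteq> 0 \<Longrightarrow> nm v > 0"
  unfolding nm_def by (cases v) (auto simp: zero_prod_def intro: add_pos_nonneg add_nonneg_pos)

lemma sdist_eq:
  assumes A: "A \<noteq> 0" and B: "B \<noteq> 0"
  shows "sdist (proj A) (proj B) = 2 * cmod (cr A B) / (nm A * nm B)"
proof -
  obtain a1 a2 where a: "A = (a1, a2)" by fastforce
  obtain b1 b2 where b: "B = (b1, b2)" by fastforce
  have nA: "nm A > 0" and nB: "nm B > 0" using nm_pos A B by auto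
  show ?thesis
  proof (cases "a2 = 0")
    case True
    hence a1: "a1 \<noteq> 0" using A a by (auto simp: zero_prod_def)
    have nmA: "nm A = cmod a1" unfolding a nm_def True by simp
    show ?thesis
    proof (cases "b2 = 0")
      case True
      then show ?thesis using \<open>a2 = 0\<close> unfolding a b proj_def sdist_def cr_def by simp
    next
      case False
      have "sdist (proj A) (proj B) = 2 / sqrt (1 + (cmod (b1/b2))\<^sup>2)"
        unfolding a b proj_def sdist_def using True False by simp
      also have "\<dots> = 2 * cmod b2 / nm B" unfolding sq1[OF False] b using False by simp
      also have "\<dots> = 2 * cmod (cr A B) / (nm A * nm B)"
        unfolding a b cr_def using True a1 by (simp add: norm_mult nm_def)
      finally show ?thesis .
    qed
  next
    case False
    show ?thesis
    proof (cases "b2 = 0")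
      case True
      hence b1: "b1 \<noteq> 0" using B b by (auto simp: zero_prod_def)
      have nmB: "nm B = cmod b1" unfolding b nm_def True by simp
      have "sdist (proj A) (proj B) = 2 / sqrt (1 + (cmod (a1/a2))\<^sup>2)"
        unfolding a b proj_def sdist_def using True False by simp
      also have "\<dots> = 2 * cmod a2 / nm A" unfolding sq1[OF False] a using False by simp
      also have "\<dots> = 2 * cmod (cr A B) / (nm A * nm B)"
        unfolding a b cr_def using True b1 by (simp add: norm_mult nm_def)
      finally show ?thesis .
    next
      case F2: False
      have "sdist (proj A) (proj B) = 2 * cmod (a1/a2 - b1/b2) / (sqrt (1 + (cmod (a1/a2))\<^sup>2) * sqrt (1 + (cmod (b1/b2))\<^sup>2))"
        unfolding a b proj_def sdist_def using False F2 by (simp add: real_sqrt_mult)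
      also have "\<dots> = 2 * cmod (a1/a2 - b1/b2) / (nm A / cmod a2 * (nm B / cmod b2))"
        unfolding sq1[OF False] sq1[OF F2] a b by simp
      also have "a1/a2 - b1/b2 = (a1 * b2 - b1 * a2) / (a2 * b2)" using False F2 by (simp add: field_simps)
      also have "2 * cmod ((a1 * b2 - b1 * a2) / (a2 * b2)) / (nm A / cmod a2 * (nm B / cmod b2)) = 2 * cmod (a1 * b2 - b1 * a2) / (nm A * nm B)"
        using False F2 nA nB by (simp add: norm_divide norm_mult divide_simps)
      finally show ?thesis unfolding a b cr_def by simp
    qed
  qed
qed

lemma nm_L1: "nm v \<ge> L1 v / 2"
proof -
  have h: "0 \<le> (cmod (fst v) - cmod (snd v))^2" by simp
  have "(L1 v / 2)^2 \<le> (cmod (fst v))^2 + (cmod (snd v))^2"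
    using h unfolding L1_def power2_diff power_divide power2_sum
    by (simp add: field_simps) (insert zero_le_power2[of "cmod (fst v)"] zero_le_power2[of "cmod (snd v)"], linarith)
  thus ?thesis unfolding nm_def by (rule real_le_rsqrt)
qed

lemma cr_bound: "cmod (cr A B) \<le> L1 A * L1 (B - A)"
proof -
  obtain a1 a2 where a: "A = (a1, a2)" by fastforce
  obtain b1 b2 where b: "B = (b1, b2)" by fastforce
  have "cr A B = a1 * (b2 - a2) - (b1 - a1) * a2" unfolding a b cr_def by (simp add: algebra_simps)
  hence "cmod (cr A B) \<le> cmod a1 * cmod (b2 - a2) + cmod (b1 - a1) * cmod a2"
    by (metis norm_mult norm_triangle_ineq4)
  also have "\<dots> \<le> (cmod a1 + cmod a2) * (cmod (b1 - a1) + cmod (b2 - a2))"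
    by (simp add: algebra_simps)
  finally show ?thesis unfolding a b L1_def by simp
qed

lemma L1_pos: "v \<noteq> 0 \<Longrightarrow> L1 v > 0"
  by (cases v) (auto simp: L1_def zero_prod_def intro: add_pos_nonneg add_nonneg_pos)

lemma L1_nonneg: "L1 v \<ge> 0" unfolding L1_def by simp

lemma sdist_bound:
  assumes A: "A \<noteq> 0" and B: "B \<noteq> 0"
  shows "sdist (proj A) (proj B) \<le> 8 * L1 (B - A) / L1 B"
proof -
  have LA: "L1 A > 0" and LB: "L1 B > 0" using A B L1_pos by auto
  have "sdist (proj A) (proj B) = 2 * cmod (cr A B) / (nm A * nm B)" by (rule sdist_eq[OF A B])
  also have "\<dots> \<le> 2 * (L1 A * L1 (B - A)) / (L1 A / 2 * (L1 B / 2))"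
  proof (rule frac_le)
    show "0 \<le> 2 * (L1 A * L1 (B - A))" using LA L1_nonneg[of "B - A"] by simp
    show "2 * cmod (cr A B) \<le> 2 * (L1 A * L1 (B - A))" using cr_bound[of A B] by simp
    show "0 < L1 A / 2 * (L1 B / 2)" using LA LB by simp
    show "L1 A / 2 * (L1 B / 2) \<le> nm A * nm B"
      using nm_L1[of A] nm_L1[of B] LA LB by (intro mult_mono) auto
  qed
  also have "\<dots> = 8 * L1 (B - A) / L1 B" using LA LB by (simp add: field_simps)
  finally show ?thesis .
qed



lemma cube_ineq:
  fixes x y :: real assumes "0 \<le> x" "0 \<le> y"
  shows "(x + y)^3 \<le> 4 * (x^3 + y^3)"
proof -
  have eq: "4*(x^3+y^3) - (x+y)^3 = 3*((x+y)*(x-y)^2)"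
    by (simp add: algebra_simps power2_eq_square power3_eq_cube)
  have "(x+y)*(x-y)^2 \<ge> 0" using assms by simp
  thus ?thesis using eq by linarith
qed

lemma lin2:
  fixes c1 c2 P Q :: complex
  assumes "cmod P \<le> T" "cmod Q \<le> T"
  shows "cmod (c1 * P + c2 * Q) \<le> (cmod c1 + cmod c2) * T"
proof -
  have "cmod (c1 * P + c2 * Q) \<le> cmod c1 * cmod P + cmod c2 * cmod Q"
    using norm_triangle_ineq[of "c1*P" "c2*Q"] by (simp add: norm_mult)
  also have "\<dots> \<le> cmod c1 * T + cmod c2 * T"
    using assms by (intro add_mono mult_left_mono) auto
  finally show ?thesis by (simp add: algebra_simps)
qed

lemma GG_lower:
  fixes s g :: complex
  assumes nd: "nondeg s g"
  shows "\<exists>\<mu>>0. \<forall>v. L1 (GG s g v) \<ge> \<mu> * (L1 v)^2"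
proof -
  define k where "k = g + 2"
  define e1 where "e1 = 1 + k * g"
  have k0: "k \<noteq> 0" using nd unfolding nondeg_def k_def by (metis add_eq_0_iff2 neg_equal_iff_equal)
  have e10: "e1 \<noteq> 0"
  proof
    assume "e1 = 0"
    hence "(g+1)^2 = 0" unfolding e1_def k_def by (simp add: power2_eq_square algebra_simps)
    thus False using nd unfolding nondeg_def by (simp add: add_eq_0_iff2)
  qed
  have s0: "s \<noteq> 0" using nd unfolding nondeg_def by simp
  define C1 where "C1 = cmod e1 + cmod k + cmod (s * k)"
  define C2 where "C2 = cmod (k * g^2) + cmod (s * g) + cmod (s * e1)"
  define C where "C = C1 + C2 + 1"
  define r where "r = min (cmod (s * e1)) (cmod (k * s * e1))"
  have C1p: "C1 \<ge> 0" and C2p: "C2 \<ge> 0" unfolding C1_def C2_def by auto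
  have Cp: "C > 0" unfolding C_def using C1p C2p by simp
  have rp: "r > 0" unfolding r_def using k0 e10 s0 by simp
  show ?thesis
  proof (intro exI[of _ "r / (8 * C)"] conjI allI)
    show "r / (8 * C) > 0" using rp Cp by simp
    fix v :: "complex \<times> complex"
    obtain X Y where v: "v = (X, Y)" by fastforce
    define x where "x = cmod X"
    define y where "y = cmod Y"
    define N where "N = x + y"
    define G1 where "G1 = fst (GG s g v)"
    define G2 where "G2 = snd (GG s g v)"
    define L where "L = cmod G1 + cmod G2"
    have LL: "L1 (GG s g v) = L" unfolding L1_def L_def G1_def G2_def by simp
    have Nv: "L1 v = N" unfolding L1_def N_def x_def y_def v by simp
    have xp: "x \<ge> 0" and yp: "y \<ge> 0" unfolding x_def y_def by auto
    have Lp: "L \<ge> 0" unfolding L_def by simp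
    have xN: "x \<le> N" and yN: "y \<le> N" unfolding N_def using xp yp by auto
    have id1: "((e1*X + k*Y)*G1 + (- s*k*X)*G2) = - s*e1*X^3"
      unfolding G1_def G2_def GG_def v e1_def k_def by (simp add: algebra_simps power3_eq_cube)
    have id2: "((- k*g^2*Y)*G1 + (- s*g*X + s*e1*Y)*G2) = k * s * e1 * (Y^3)"
      unfolding G1_def G2_def GG_def v e1_def k_def by (simp add: algebra_simps power3_eq_cube power2_eq_square)
    have b1: "cmod (s*e1) * x^3 \<le> C1 * N * L"
    proof -
      have "cmod (s*e1) * x^3 = cmod ((e1*X + k*Y)*G1 + (- s*k*X)*G2)"
        unfolding id1 x_def by (simp add: norm_mult norm_power)
      also have "\<dots> \<le> cmod (e1*X + k*Y) * cmod G1 + cmod (- s*k*X) * cmod G2"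
        using norm_triangle_ineq[of "(e1*X + k*Y)*G1" "(- s*k*X)*G2"] by (simp add: norm_mult)
      also have "\<dots> \<le> (C1 * N) * cmod G1 + (C1 * N) * cmod G2"
      proof (intro add_mono mult_right_mono)
        have "cmod (e1*X + k*Y) \<le> cmod e1 * x + cmod k * y"
          using norm_triangle_ineq[of "e1*X" "k*Y"] by (simp add: norm_mult x_def y_def)
        also have "\<dots> \<le> cmod e1 * N + cmod k * N"
          using xN yN by (intro add_mono mult_left_mono) auto
        also have "\<dots> \<le> C1 * N" unfolding C1_def using xp yp N_def by (simp add: algebra_simps)
        finally show "cmod (e1*X + k*Y) \<le> C1 * N" .
        have "cmod (- s*k*X) = cmod (s*k) * x" by (simp add: norm_mult x_def)
        also have "\<dots> \<le> cmod (s*k) * N" using xN by (intro mult_left_mono) auto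
        also have "\<dots> \<le> C1 * N" unfolding C1_def using xp yp N_def by (intro mult_right_mono) auto
        finally show "cmod (- s*k*X) \<le> C1 * N" .
      qed auto
      also have "\<dots> = C1 * N * L" unfolding L_def by (simp add: algebra_simps)
      finally show ?thesis .
    qed
    have b2: "cmod (k * s * e1) * y^3 \<le> C2 * N * L"
    proof -
      have "cmod (k * s * e1) * y^3 = cmod ((- k*g^2*Y)*G1 + (- s*g*X + s*e1*Y)*G2)"
        unfolding id2 y_def by (simp add: norm_mult norm_power)
      also have "\<dots> \<le> cmod (- k*g^2*Y) * cmod G1 + cmod (- s*g*X + s*e1*Y) * cmod G2"
        using norm_triangle_ineq[of "(- k*g^2*Y)*G1" "(- s*g*X + s*e1*Y)*G2"] by (simp add: norm_mult)
      also have "\<dots> \<le> (C2 * N) * cmod G1 + (C2 * N) * cmod G2"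
      proof (intro add_mono mult_right_mono)
        have "cmod (- k*g^2*Y) = cmod (k*g^2) * y" by (simp add: norm_mult y_def)
        also have "\<dots> \<le> cmod (k*g^2) * N" using yN by (intro mult_left_mono) auto
        also have "\<dots> \<le> C2 * N" unfolding C2_def using xp yp N_def by (intro mult_right_mono) auto
        finally show "cmod (- k*g^2*Y) \<le> C2 * N" .
        have "cmod (- s*g*X + s*e1*Y) \<le> cmod (s*g) * x + cmod (s*e1) * y"
          using norm_triangle_ineq[of "- s*g*X" "s*e1*Y"] by (simp add: norm_mult x_def y_def)
        also have "\<dots> \<le> cmod (s*g) * N + cmod (s*e1) * N"
          using xN yN by (intro add_mono mult_left_mono) auto
        also have "\<dots> \<le> C2 * N" unfolding C2_def using xp yp N_def by (simp add: algebra_simps)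
        finally show "cmod (- s*g*X + s*e1*Y) \<le> C2 * N" .
      qed auto
      also have "\<dots> = C2 * N * L" unfolding L_def by (simp add: algebra_simps)
      finally show ?thesis .
    qed
    have NL: "N * L \<ge> 0" using xp yp Lp N_def by simp
    have "r * x^3 \<le> C * N * L"
    proof -
      have "r * x^3 \<le> cmod (s*e1) * x^3" unfolding r_def using xp by (intro mult_right_mono) auto
      also have "\<dots> \<le> C1 * N * L" by (rule b1)
      also have "\<dots> \<le> C * N * L" unfolding C_def using NL C2p
        by (simp add: algebra_simps mult_nonneg_nonneg)
      finally show ?thesis .
    qed
    moreover have "r * y^3 \<le> C * N * L"
    proof -
      have "r * y^3 \<le> cmod (k * s * e1) * y^3" unfolding r_def using yp by (intro mult_right_mono) auto
      also have "\<dots> \<le> C2 * N * L" by (rule b2)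
      also have "\<dots> \<le> C * N * L" unfolding C_def using NL C1p
        by (simp add: algebra_simps mult_nonneg_nonneg)
      finally show ?thesis .
    qed
    ultimately have "r * (x^3 + y^3) \<le> 2 * (C * N * L)" by (simp add: algebra_simps)
    moreover have "r * N^3 \<le> r * (4 * (x^3 + y^3))"
      unfolding N_def using cube_ineq[OF xp yp] rp by (intro mult_left_mono) auto
    ultimately have key: "r * N^3 \<le> 8 * C * N * L" by (simp add: algebra_simps)
    show "L1 (GG s g v) \<ge> r / (8 * C) * (L1 v)^2"
    proof (cases "N = 0")
      case True then show ?thesis unfolding LL Nv using Lp by simp
    next
      case False
      hence Np: "N > 0" using xp yp N_def by simp
      have "N * (r * N^2) \<le> N * (8 * C * L)" using key by (simp add: algebra_simps power3_eq_cube power2_eq_square)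
      hence "r * N^2 \<le> 8 * C * L" using Np by (simp add: mult_le_cancel_left_pos)
      thus ?thesis unfolding LL Nv using Cp by (simp add: field_simps)
    qed
  qed
qed



definition lv :: "sphere \<Rightarrow> complex \<times> complex" where
  "lv z = (case z of None \<Rightarrow> (1, 0) | Some x \<Rightarrow> (x, 1))"

lemma lv_proj: "proj (lv z) = z" unfolding lv_def proj_def by (cases z) auto
lemma lv_nz: "lv z \<noteq> 0" unfolding lv_def by (cases z) (auto simp: zero_prod_def)

lemma sq_bounds:
  fixes x y :: real assumes "0 \<le> x" "0 \<le> y"
  shows "x * y \<le> (x+y)^2" "x * x \<le> (x+y)^2" "y * y \<le> (x+y)^2"
  using assms by (auto simp: power2_eq_square algebra_simps mult_nonneg_nonneg)

lemma diff_bound: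
  fixes s g s0 g0 :: complex
  assumes rho: "\<rho> \<le> 1" and ds: "cmod (s - s0) < \<rho>" and dg: "cmod (g - g0) < \<rho>"
  shows "L1 (GG s0 g0 v - GG s g v) \<le> \<rho> * (2 * cmod (g0+2) + cmod s0 + cmod g0 + 4) * (L1 v)^2"
proof -
  obtain X Y where v: "v = (X, Y)" by fastforce
  define k0 where "k0 = g0 + 2"
  define k where "k = g + 2"
  define T where "T = (L1 v)^2"
  have kk: "k0 - k = g0 - g" unfolding k_def k0_def by simp
  have xy: "cmod (X*Y) \<le> T" "cmod (X*X) \<le> T" "cmod (Y*Y) \<le> T"
    unfolding T_def L1_def v using sq_bounds[of "cmod X" "cmod Y"] by (auto simp: norm_mult)
  have Tp: "T \<ge> 0" unfolding T_def by simp
  have r0: "\<rho> \<ge> 0" using ds norm_ge_zero[of "s - s0"] by linarith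
  have c1: "cmod (s0*k0 - s*k) \<le> \<rho> * (cmod k0 + cmod s0 + 1)"
  proof -
    have "s0*k0 - s*k = (s0 - s) * k0 + s * (k0 - k)" by (simp add: algebra_simps)
    hence "cmod (s0*k0 - s*k) \<le> cmod (s0 - s) * cmod k0 + cmod s * cmod (g0 - g)"
      using norm_triangle_ineq[of "(s0 - s) * k0" "s * (k0 - k)"] kk by (simp add: norm_mult)
    also have "\<dots> \<le> \<rho> * cmod k0 + (cmod s0 + 1) * \<rho>"
    proof (intro add_mono mult_mono)
      show "cmod (s0 - s) \<le> \<rho>" using ds by (simp add: norm_minus_commute)
      show "cmod (g0 - g) \<le> \<rho>" using dg by (simp add: norm_minus_commute)
      have "cmod s \<le> cmod s0 + cmod (s - s0)" by (metis norm_triangle_ineq add.commute diff_add_cancel)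
      thus "cmod s \<le> cmod s0 + 1" using ds rho by simp
    qed (use r0 in auto)
    finally show ?thesis by (simp add: algebra_simps)
  qed
  have c2: "cmod (k0*g0 - k*g) \<le> \<rho> * (cmod g0 + cmod k0 + 1)"
  proof -
    have "k0*g0 - k*g = (k0 - k) * g0 + k * (g0 - g)" by (simp add: algebra_simps)
    hence "cmod (k0*g0 - k*g) \<le> cmod (g0 - g) * cmod g0 + cmod k * cmod (g0 - g)"
      using norm_triangle_ineq[of "(k0 - k) * g0" "k * (g0 - g)"] kk by (simp add: norm_mult)
    also have "\<dots> \<le> \<rho> * cmod g0 + (cmod k0 + 1) * \<rho>"
    proof (intro add_mono mult_mono)
      show "cmod (g0 - g) \<le> \<rho>" using dg by (simp add: norm_minus_commute)
      have "cmod k \<le> cmod k0 + cmod (k - k0)" by (metis norm_triangle_ineq add.commute diff_add_cancel)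
      moreover have "k - k0 = g - g0" unfolding k_def k0_def by simp
      ultimately show "cmod k \<le> cmod k0 + 1" using dg rho by simp
    qed (use r0 dg in \<open>auto simp: norm_minus_commute\<close>)
    finally show ?thesis by (simp add: algebra_simps)
  qed
  have e1: "fst (GG s0 g0 v - GG s g v) = (s0*k0 - s*k) * (X*Y) + (-(s0 - s)) * (X*X)"
    unfolding GG_def v k_def k0_def by (simp add: algebra_simps)
  have e2: "snd (GG s0 g0 v - GG s g v) = (k0*g0 - k*g) * (X*Y) + (k0 - k) * (Y*Y)"
    unfolding GG_def v k_def k0_def by (simp add: algebra_simps)
  have "cmod (fst (GG s0 g0 v - GG s g v)) \<le> (cmod (s0*k0 - s*k) + cmod (-(s0 - s))) * T"
    unfolding e1 by (rule lin2) (use xy in auto)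
  also have "\<dots> \<le> (\<rho> * (cmod k0 + cmod s0 + 1) + \<rho>) * T"
    using c1 ds Tp by (intro mult_right_mono add_mono) (auto simp: norm_minus_commute)
  finally have f1: "cmod (fst (GG s0 g0 v - GG s g v)) \<le> (\<rho> * (cmod k0 + cmod s0 + 1) + \<rho>) * T" .
  have "cmod (snd (GG s0 g0 v - GG s g v)) \<le> (cmod (k0*g0 - k*g) + cmod (k0 - k)) * T"
    unfolding e2 by (rule lin2) (use xy in auto)
  also have "\<dots> \<le> (\<rho> * (cmod g0 + cmod k0 + 1) + \<rho>) * T"
    using c2 dg Tp kk by (intro mult_right_mono add_mono) (auto simp: norm_minus_commute)
  finally have f2: "cmod (snd (GG s0 g0 v - GG s g v)) \<le> (\<rho> * (cmod g0 + cmod k0 + 1) + \<rho>) * T" .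
  show ?thesis using f1 f2 unfolding L1_def[of "GG s0 g0 v - GG s g v"] T_def[symmetric] k0_def[symmetric]
    by (simp add: algebra_simps)
qed

lemma close:
  fixes s0 g0 :: complex
  assumes nd: "nondeg s0 g0" and e: "e > 0"
  shows "\<exists>\<rho>>0. \<forall>s g. cmod (s - s0) < \<rho> \<and> cmod (g - g0) < \<rho> \<longrightarrow>
            nondeg s g \<and> (\<forall>z. sdist (gm s g z) (gm s0 g0 z) \<le> e)"
proof -
  obtain \<mu> where mu: "\<mu> > 0" "\<forall>v. L1 (GG s0 g0 v) \<ge> \<mu> * (L1 v)^2" using GG_lower[OF nd] by blast
  define M where "M = 2 * cmod (g0+2) + cmod s0 + cmod g0 + 4"
  have Mp: "M > 0" unfolding M_def by (simp add: add_nonneg_pos)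
  have s0: "cmod s0 > 0" and g2: "cmod (g0 + 2) > 0" and g1: "cmod (g0 + 1) > 0"
    using nd unfolding nondeg_def by (auto simp: add_eq_0_iff2)
  define \<rho> where "\<rho> = Min {1, cmod s0, cmod (g0+2), cmod (g0+1), e * \<mu> / (8 * M)}"
  have rp: "\<rho> > 0" unfolding \<rho>_def using s0 g2 g1 e mu Mp by auto
  have r1: "\<rho> \<le> 1" "\<rho> \<le> cmod s0" "\<rho> \<le> cmod (g0+2)" "\<rho> \<le> cmod (g0+1)" "\<rho> \<le> e * \<mu> / (8 * M)"
    unfolding \<rho>_def by auto
  show ?thesis
  proof (intro exI[of _ \<rho>] conjI allI impI rp)
    fix s g assume sg: "cmod (s - s0) < \<rho> \<and> cmod (g - g0) < \<rho>"
    show ndsg: "nondeg s g" unfolding nondeg_def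
    proof (intro conjI)
      show "s \<noteq> 0" using sg r1 by auto
      show "g \<noteq> -2" using sg r1 by (auto simp: norm_minus_commute)
      show "g \<noteq> -1" using sg r1 by (auto simp: norm_minus_commute)
    qed
    fix z
    define v where "v = lv z"
    have v0: "v \<noteq> 0" unfolding v_def by (rule lv_nz)
    have Lv: "L1 v > 0" using L1_pos[OF v0] .
    have A: "gm s g z = proj (GG s g v)" "GG s g v \<noteq> 0"
      using lift[OF ndsg v0] lv_proj unfolding v_def by auto
    have B: "gm s0 g0 z = proj (GG s0 g0 v)" "GG s0 g0 v \<noteq> 0"
      using lift[OF nd v0] lv_proj unfolding v_def by auto
    have LB: "L1 (GG s0 g0 v) \<ge> \<mu> * (L1 v)^2" by (rule mu(2)[rule_format])
    have LBp: "\<mu> * (L1 v)^2 > 0" using mu Lv by simp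
    have "sdist (gm s g z) (gm s0 g0 z) \<le> 8 * L1 (GG s0 g0 v - GG s g v) / L1 (GG s0 g0 v)"
      unfolding A B by (rule sdist_bound[OF A(2) B(2)])
    also have "\<dots> \<le> 8 * (\<rho> * M * (L1 v)^2) / (\<mu> * (L1 v)^2)"
    proof (rule frac_le)
      show "0 \<le> 8 * (\<rho> * M * (L1 v)^2)" using rp Mp by simp
      show "8 * L1 (GG s0 g0 v - GG s g v) \<le> 8 * (\<rho> * M * (L1 v)^2)"
        using diff_bound[OF r1(1), of s s0 g g0 v] sg unfolding M_def by simp
      show "0 < \<mu> * (L1 v)^2" by (rule LBp)
      show "\<mu> * (L1 v)^2 \<le> L1 (GG s0 g0 v)" by (rule LB)
    qed
    also have "\<dots> = 8 * \<rho> * M / \<mu>" using Lv mu by (simp add: field_simps)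
    also have "\<dots> \<le> 8 * (e * \<mu> / (8 * M)) * M / \<mu>"
      using r1(5) Mp mu by (intro divide_right_mono mult_right_mono mult_left_mono) auto
    also have "\<dots> = e" using Mp mu by (simp add: field_simps)
    finally show "sdist (gm s g z) (gm s0 g0 z) \<le> e" .
  qed
qed



definition rm :: "complex \<Rightarrow> complex \<Rightarrow> complex \<Rightarrow> sphere \<Rightarrow> sphere" where
  "rm b a g = rat_map [:0, b, a:] [:1, g:]"

lemma rm_Some: "rm b a g (Some x) = (if 1 + g*x = 0 then None else Some ((b*x + a*x^2)/(1 + g*x)))"
  unfolding rm_def rat_map_def by (simp add: algebra_simps power2_eq_square)

lemma rm_None: "a \<noteq> 0 \<Longrightarrow> rm b a g None = None"
  unfolding rm_def rat_map_def by auto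

lemma chart_fin:
  assumes "1 + g*w \<noteq> 0"
  shows "(\<lambda>x. chart_at (rm b a g (Some w)) (rm b a g (inv_chart_at (Some w) x))) = (\<lambda>x. (b*x + a*x^2)/(1 + g*x))"
  using assms by (auto simp: rm_Some chart_at_def inv_chart_at_def fun_eq_iff)

lemma chart_pole:
  assumes "1 + g*w = 0"
  shows "(\<lambda>x. chart_at (rm b a g (Some w)) (rm b a g (inv_chart_at (Some w) x))) = (\<lambda>x. (1 + g*x)/(b*x + a*x^2))"
  using assms by (auto simp: rm_Some chart_at_def inv_chart_at_def fun_eq_iff)

lemma chart_inf:
  assumes "a \<noteq> 0"
  shows "(\<lambda>x. chart_at (rm b a g None) (rm b a g (inv_chart_at None x))) = (\<lambda>x. x*(x+g)/(a + b*x))"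
proof
  fix x
  show "chart_at (rm b a g None) (rm b a g (inv_chart_at None x)) = x*(x+g)/(a + b*x)"
  proof (cases "x = 0")
    case True then show ?thesis using assms by (simp add: rm_None chart_at_def inv_chart_at_def)
  next
    case False
    have e: "(1 + g * inverse x) / (b * inverse x + a * (inverse x)^2) = x*(x+g)/(a + b*x)"
    proof -
      have "(1 + g * inverse x) / (b * inverse x + a * (inverse x)^2)
          = ((1 + g * inverse x) * x^2) / ((b * inverse x + a * (inverse x)^2) * x^2)"
        using False by simp
      also have "\<dots> = x*(x+g)/(a + b*x)" using False
        by (simp add: algebra_simps power2_eq_square)
      finally show ?thesis .
    qed
    show ?thesis using False assms e
      by (auto simp: rm_None rm_Some chart_at_def inv_chart_at_def)
  qed
qed

lemma sd_fin:
  assumes "1 + g*w \<noteq> 0"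
  shows "sphere_deriv (rm b a g) (Some w) D \<longleftrightarrow> D = (b + 2*a*w + a*g*w^2)/(1 + g*w)^2"
proof -
  have d: "((\<lambda>x. (b*x + a*x^2)/(1 + g*x)) has_field_derivative (b + 2*a*w + a*g*w^2)/(1 + g*w)^2) (at w)"
    using assms by (auto intro!: derivative_eq_intros simp: field_simps power2_eq_square)
  show ?thesis unfolding sphere_deriv_def chart_fin[OF assms]
    using d DERIV_unique by (auto simp: chart_at_def)
qed

lemma sd_pole:
  assumes "1 + g*w = 0" "b*w + a*w^2 \<noteq> 0"
  shows "sphere_deriv (rm b a g) (Some w) D \<longleftrightarrow> D = g/(b*w + a*w^2)"
proof -
  have d0: "((\<lambda>x. (1 + g*x)/(b*x + a*x^2)) has_field_derivative
      (g * (b*w + a*w^2) - (1 + g*w) * (b + a*(2*w))) / ((b*w + a*w^2) * (b*w + a*w^2))) (at w)"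
    by (rule DERIV_divide) (use assms in \<open>auto intro!: derivative_eq_intros simp: power2_eq_square\<close>)
  have "(g * (b*w + a*w^2) - (1 + g*w) * (b + a*(2*w))) / ((b*w + a*w^2) * (b*w + a*w^2)) = g/(b*w + a*w^2)"
    using assms by simp
  with d0 have d: "((\<lambda>x. (1 + g*x)/(b*x + a*x^2)) has_field_derivative g/(b*w + a*w^2)) (at w)" by simp
  show ?thesis unfolding sphere_deriv_def chart_pole[OF assms(1)]
    using d DERIV_unique by (auto simp: chart_at_def)
qed

lemma sd_inf:
  assumes "a \<noteq> 0"
  shows "sphere_deriv (rm b a g) None D \<longleftrightarrow> D = g/a"
proof -
  have d: "((\<lambda>x. x*(x+g)/(a + b*x)) has_field_derivative g/a) (at 0)"
    using assms by (auto intro!: derivative_eq_intros simp: field_simps power2_eq_square)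
  show ?thesis unfolding sphere_deriv_def chart_inf[OF assms]
    using d DERIV_unique by (auto simp: chart_at_def)
qed



lemma gm_rm: "gm s g = rm s (- s / (g + 2)) g" unfolding gm_def rm_def by simp

lemma coprime_PQ:
  assumes nd: "nondeg s g"
  shows "coprime [:0, s, - s / (g + 2):] [:1, g:]"
proof -
  have s0: "s \<noteq> 0" and g2: "g + 2 \<noteq> 0" and g1: "g + 1 \<noteq> 0"
    using nd unfolding nondeg_def by (auto simp: add_eq_0_iff2)
  define u where "u = s * ((g + 1) * (g + 1))"
  have u0: "u \<noteq> 0" unfolding u_def using s0 g1 by simp
  define \<kappa> where "\<kappa> = - (g * g * (g + 2))"
  define e where "e = - (g * s)"
  have c1: "\<kappa> * s + e + g * u = 0" unfolding \<kappa>_def e_def u_def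
    by (simp add: algebra_simps)
  have c2: "\<kappa> * (- s / (g + 2)) + e * g = 0" unfolding \<kappa>_def e_def using g2
    by (simp add: field_simps)
  have id: "[:\<kappa>:] * [:0, s, - s / (g + 2):] + [:u, e:] * [:1, g:] = [:u:]"
  proof -
    have "poly ([:\<kappa>:] * [:0, s, - s / (g + 2):] + [:u, e:] * [:1, g:]) x
        = u + (\<kappa> * s + e + g * u) * x + (\<kappa> * (- s / (g + 2)) + e * g) * x^2" for x
      by (simp add: algebra_simps power2_eq_square)
    hence "poly ([:\<kappa>:] * [:0, s, - s / (g + 2):] + [:u, e:] * [:1, g:]) x = poly [:u:] x" for x
      unfolding c1 c2 by simp
    hence "poly ([:\<kappa>:] * [:0, s, - s / (g + 2):] + [:u, e:] * [:1, g:]) = poly [:u:]" by auto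
    thus ?thesis using poly_eq_poly_eq_iff by blast
  qed
  show ?thesis
  proof (rule coprimeI)
    fix c assume "c dvd [:0, s, - s / (g + 2):]" "c dvd [:1, g:]"
    hence "c dvd [:\<kappa>:] * [:0, s, - s / (g + 2):] + [:u, e:] * [:1, g:]"
      by (intro dvd_add dvd_mult)
    hence "c dvd [:u:]" unfolding id .
    moreover have "is_unit [:u:]" using u0 by (simp add: is_unit_const_poly_iff dvd_field_iff)
    ultimately show "is_unit c" using dvd_unit_imp_unit by blast
  qed
qed


lemma gm_in_Z:
  assumes nd: "nondeg s g" and pp: "PP m n s g = 0"
  shows "gm s g \<in> Z s m n"
proof -
  have s0: "s \<noteq> 0" and g2: "g + 2 \<noteq> 0" and g1: "g + 1 \<noteq> 0"
    using nd unfolding nondeg_def by (auto simp: add_eq_0_iff2)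
  define a where "a = - s / (g + 2)"
  have a0: "a \<noteq> 0" unfolding a_def using s0 g2 by simp
  have sa: "s = - a * (g + 2)" unfolding a_def using g2 by simp
  have G: "gm s g = rm s a g" unfolding gm_rm a_def ..
  have qr: "quad_rat (gm s g)" unfolding quad_rat_def
    by (intro exI[of _ "[:0, s, - s / (g + 2):]"] exI[of _ "[:1, g:]"] conjI coprime_PQ[OF nd])
       (use a0 in \<open>auto simp: gm_def a_def\<close>)
  have d1: "sphere_deriv (gm s g) (Some 1) 0"
  proof -
    have "1 + g * 1 \<noteq> 0" using g1 by (simp add: add.commute)
    moreover have "(s + 2*a*1 + a*g*1^2)/(1 + g*1)^2 = 0" unfolding sa by (simp add: algebra_simps)
    ultimately show ?thesis unfolding G using sd_fin by metis
  qed
  have d0: "sphere_deriv (gm s g) (Some 0) s"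
    unfolding G using sd_fin[of g 0 s a s] by simp
  have dc: "proj (cpt g) \<noteq> Some 1 \<and> sphere_deriv (gm s g) (proj (cpt g)) 0"
  proof (cases "g = 0")
    case True
    have "proj (cpt g) = None" unfolding proj_def cpt_def True by simp
    then show ?thesis unfolding G using sd_inf[OF a0, of s g 0] True by simp
  next
    case False
    define w where "w = - (g + 2) / g"
    have pw: "proj (cpt g) = Some w" unfolding proj_def cpt_def w_def using False by simp
    have gw: "g * w = - (g + 2)" unfolding w_def using False by simp
    have "1 + g * w = - (g + 1)" unfolding gw by (simp add: algebra_simps)
    hence q: "1 + g * w \<noteq> 0" using g1 by (metis neg_equal_0_iff_equal)
    have w1: "w \<noteq> 1"
    proof
      assume "w = 1"
      with gw have "g = - (g + 2)" by simp
      hence "2 * (g + 1) = 0" by (simp add: algebra_simps)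
      thus False using g1 by (simp only: mult_eq_0_iff) simp
    qed
    have num: "s + 2*a*w + a*g*w^2 = 0"
    proof -
      have "s + 2*a*w + a*g*w^2 = a * ((g*w) * w + 2*w - g - 2)" unfolding sa power2_eq_square
        by algebra
      also have "\<dots> = 0" using gw by algebra
      finally show ?thesis .
    qed
    show ?thesis unfolding pw G using w1 sd_fin[OF q, of s a 0] num by simp
  qed
  have orbit: "(gm s g ^^ m) (proj (cpt g)) = (gm s g ^^ n) (proj (cpt g))"
    using orbit_iff[OF nd] pp by simp
  have z0: "gm s g (Some 0) = Some 0" unfolding G by (simp add: rm_Some)
  have zi: "gm s g None = None" using gm_None[OF nd] .
  show ?thesis unfolding Z_def using qr d1 d0 dc orbit z0 zi by blast
qed



lemma poly_deg2:
  fixes p :: "complex poly"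
  assumes "degree p \<le> 2"
  shows "poly p x = coeff p 0 + coeff p 1 * x + coeff p 2 * x^2"
  using poly_sum_le[OF assms, of x] by (simp add: numeral_2_eq_2)

lemma poly_deg1:
  fixes p :: "complex poly"
  assumes "degree p \<le> 1"
  shows "poly p x = coeff p 0 + coeff p 1 * x"
  using poly_sum_le[OF assms, of x] by simp

lemma Z_form:
  assumes s0: "s \<noteq> 0" and gZ: "g \<in> Z s m n"
  shows "\<exists>\<gamma>. nondeg s \<gamma> \<and> g = gm s \<gamma> \<and> PP m n s \<gamma> = 0"
proof -
  from gZ have qr: "quad_rat g" and d1: "sphere_deriv g (Some 1) 0"
    and cc: "\<exists>c. c \<noteq> Some 1 \<and> sphere_deriv g c 0 \<and> (g ^^ m) c = (g ^^ n) c"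
    and z0: "g (Some 0) = Some 0" and zi: "g None = None" and d0: "sphere_deriv g (Some 0) s"
    unfolding Z_def by auto
  from qr obtain p q where cop: "coprime p q" and dg: "max (degree p) (degree q) = 2" and gpq: "g = rat_map p q"
    unfolding quad_rat_def by blast
  have dpq: "degree p > degree q"
    using zi unfolding gpq rat_map_def by (auto split: if_splits)
  hence dp: "degree p = 2" and dq: "degree q \<le> 1" using dg by auto
  have q0: "poly q 0 \<noteq> 0" and p0: "poly p 0 = 0"
    using z0 unfolding gpq rat_map_def by (auto split: if_splits)
  define c0 where "c0 = coeff q 0"
  have c0: "c0 \<noteq> 0" using q0 unfolding c0_def by (simp add: poly_0_coeff_0)
  define b where "b = coeff p 1 / c0"
  define a where "a = coeff p 2 / c0"
  define \<gamma> where "\<gamma> = coeff q 1 / c0"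
  have "p \<noteq> 0" using dp by auto
  hence "coeff p 2 \<noteq> 0" using leading_coeff_neq_0[of p] dp by simp
  hence a0: "a \<noteq> 0" unfolding a_def using c0 by simp
  have pp: "poly p x = c0 * (b*x + a*x^2)" for x
    using poly_deg2[of p x] dp p0 c0 unfolding a_def b_def by (simp add: poly_0_coeff_0 field_simps)
  have qq: "poly q x = c0 * (1 + \<gamma>*x)" for x
    using poly_deg1[OF dq, of x] c0 unfolding \<gamma>_def c0_def by (simp add: field_simps)
  have grm: "g = rm b a \<gamma>"
  proof
    fix w show "g w = rm b a \<gamma> w"
    proof (cases w)
      case None then show ?thesis using zi rm_None[OF a0] by simp
    next
      case (Some x)
      then show ?thesis unfolding gpq using c0
        by (auto simp: rat_map_def rm_Some pp qq)
    qed
  qed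
  have noc: "b*x + a*x^2 \<noteq> 0" if "1 + \<gamma>*x = 0" for x
  proof
    assume "b*x + a*x^2 = 0"
    hence "poly p x = 0" "poly q x = 0" using that pp qq by auto
    hence "[:-x, 1:] dvd p" "[:-x, 1:] dvd q" by (simp_all add: poly_eq_0_iff_dvd)
    hence "is_unit [:-x, 1:]" using cop by (meson coprime_common_divisor)
    thus False by (simp add: is_unit_iff_degree)
  qed
  have sb: "s = b" using d0 unfolding grm using sd_fin[of \<gamma> 0 b a s] by simp
  have g1: "1 + \<gamma> \<noteq> 0"
  proof
    assume h: "1 + \<gamma> = 0"
    have "b*1 + a*1^2 \<noteq> 0" using noc[of 1] h by simp
    hence "0 = \<gamma> / (b*1 + a*1^2)" using d1 sd_pole[of \<gamma> 1 b a 0] h unfolding grm by simp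
    hence "\<gamma> = 0" using \<open>b*1 + a*1^2 \<noteq> 0\<close> by simp
    thus False using h by simp
  qed
  have "0 = (b + 2*a*1 + a*\<gamma>*1^2)/(1 + \<gamma>*1)^2" using d1 sd_fin[of \<gamma> 1 b a 0] g1 unfolding grm by simp
  hence rel: "b + 2*a + a*\<gamma> = 0" using g1 by simp
  have g2: "\<gamma> + 2 \<noteq> 0"
  proof
    assume "\<gamma> + 2 = 0"
    moreover have "b = - a * (\<gamma> + 2)" using rel by algebra
    ultimately have "b = 0" by simp
    thus False using s0 sb by simp
  qed
  have "a * (\<gamma> + 2) = - s" using rel sb by algebra
  hence aform: "a = - s / (\<gamma> + 2)" using g2 by (simp add: field_simps)
  have nd: "nondeg s \<gamma>" unfolding nondeg_def using s0 g1 g2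
    by (auto simp: add_eq_0_iff2 add.commute)
  have ggm: "g = gm s \<gamma>" unfolding grm gm_rm aform sb ..
  from cc obtain c where c1: "c \<noteq> Some 1" and dc: "sphere_deriv g c 0" and orb: "(g ^^ m) c = (g ^^ n) c"
    by blast
  have cp: "c = proj (cpt \<gamma>)"
  proof (cases c)
    case None
    have "0 = \<gamma> / a" using dc sd_inf[OF a0, of b \<gamma> 0] unfolding grm None by simp
    hence "\<gamma> = 0" using a0 by simp
    then show ?thesis unfolding None proj_def cpt_def by simp
  next
    case (Some w)
    show ?thesis
    proof (cases "1 + \<gamma>*w = 0")
      case True
      have "0 = \<gamma> / (b*w + a*w^2)" using dc sd_pole[OF True noc[OF True], of 0] unfolding grm Some by simp
      hence "\<gamma> = 0" using noc[OF True] by simp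
      then show ?thesis using True by simp
    next
      case False
      have "0 = (b + 2*a*w + a*\<gamma>*w^2)/(1 + \<gamma>*w)^2" using dc sd_fin[OF False, of b a 0] unfolding grm Some by simp
      hence "b + 2*a*w + a*\<gamma>*w^2 = 0" using False by simp
      hence "a * ((w - 1) * (\<gamma>*w + \<gamma> + 2)) = 0" using rel
        unfolding power2_eq_square by algebra
      moreover have "w \<noteq> 1" using c1 Some by simp
      ultimately have e: "\<gamma>*w + \<gamma> + 2 = 0" using a0 by simp
      hence gn: "\<gamma> \<noteq> 0" by auto
      have "\<gamma> * w = - (\<gamma> + 2)" using e by algebra
      hence "w = - (\<gamma> + 2) / \<gamma>" using gn by (simp add: field_simps)
      then show ?thesis unfolding Some proj_def cpt_def using gn by simp
    qed
  qed
  have "PP m n s \<gamma> = 0" using orb orbit_iff[OF nd] unfolding cp ggm by simp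
  thus ?thesis using nd ggm by blast
qed



definition sc :: "complex \<Rightarrow> complex \<times> complex \<Rightarrow> complex \<times> complex" where
  "sc c v = (c * fst v, c * snd v)"

lemma GG_sc: "GG s g (sc c v) = sc (c^2) (GG s g v)"
  unfolding GG_def sc_def by (simp add: algebra_simps power2_eq_square)

lemma GG_iter_sc: "(GG s g ^^ j) (sc c v) = sc (c ^ (2^j)) ((GG s g ^^ j) v)"
proof (induction j arbitrary: c v)
  case 0 then show ?case by simp
next
  case (Suc j)
  have "(GG s g ^^ Suc j) (sc c v) = (GG s g ^^ j) (GG s g (sc c v))" by (simp only: funpow_Suc_right comp_apply)
  also have "\<dots> = (GG s g ^^ j) (sc (c^2) (GG s g v))" by (simp add: GG_sc)
  also have "\<dots> = sc ((c^2) ^ (2^j)) ((GG s g ^^ j) (GG s g v))" by (rule Suc.IH)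
  also have "(c^2) ^ (2^j) = c ^ (2^Suc j)"
    by (simp add: power_mult[symmetric] mult.commute)
  also have "(GG s g ^^ j) (GG s g v) = (GG s g ^^ Suc j) v"
    by (simp only: funpow_Suc_right comp_apply)
  finally show ?case .
qed

lemma cr_sc: "cr (sc a u) (sc b v) = a * b * cr u v" "cr u (sc b v) = b * cr u v" "cr (sc a u) v = a * cr u v"
  unfolding cr_def sc_def by (simp_all add: algebra_simps)

definition c1 :: "complex \<Rightarrow> complex \<Rightarrow> complex \<times> complex" where
  "c1 s t = (- s * (1 + t), - ((1 - t)^2))"

definition W :: "complex \<Rightarrow> nat \<Rightarrow> complex \<Rightarrow> complex \<times> complex" where
  "W s j t = (GG s (-1 + t) ^^ j) (c1 s t)"

lemma GG_cpt: "GG s (-1 + t) (cpt (-1 + t)) = sc (t * (1 + t)) (c1 s t)"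
  unfolding GG_def cpt_def sc_def c1_def by (simp add: algebra_simps power2_eq_square)

lemma orb_W: "orb s (-1 + t) (Suc j) = sc ((t * (1 + t)) ^ (2^j)) (W s j t)"
  unfolding orb_def W_def by (simp only: funpow_Suc_right comp_apply GG_cpt GG_iter_sc)

lemma orb_W': "orb s (t - 1) (Suc j) = sc ((t * (1 + t)) ^ (2^j)) (W s j t)"
  using orb_W[of s t j] by simp

lemma W_cont: "isCont (\<lambda>t. fst (W s j t)) x \<and> isCont (\<lambda>t. snd (W s j t)) x"
proof (induction j)
  case 0 then show ?case unfolding W_def c1_def by (auto intro!: continuous_intros)
next
  case (Suc j)
  have e: "W s (Suc j) t = GG s (-1 + t) (W s j t)" for t unfolding W_def by simp
  show ?case unfolding e GG_def fst_conv snd_conv using Suc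
    by (auto intro!: continuous_intros)
qed

lemma W_zero:
  assumes s: "\<And>i. i \<ge> 1 \<Longrightarrow> s ^ i \<noteq> 1"
  shows "\<exists>\<kappa>. \<kappa> \<noteq> 0 \<and> W s j 0 = (\<kappa> * s ^ (j+1), \<kappa>)"
proof (induction j)
  case 0 then show ?case unfolding W_def c1_def by (intro exI[of _ "-1"]) simp
next
  case (Suc j)
  then obtain \<kappa> where k: "\<kappa> \<noteq> 0" "W s j 0 = (\<kappa> * s ^ (j+1), \<kappa>)" by blast
  have e: "W s (Suc j) 0 = GG s (-1) (W s j 0)" unfolding W_def by simp
  have ne: "1 - s^(j+1) \<noteq> 0" using s[of "j+1"] by simp
  show ?case
    by (intro exI[of _ "\<kappa>^2 * (1 - s^(j+1))"] conjI)
       (use k ne in \<open>auto simp: e GG_def algebra_simps power2_eq_square\<close>)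
qed

lemma PP_nonzero:
  fixes s :: complex
  assumes s: "\<And>i. i \<ge> 1 \<Longrightarrow> s ^ i \<noteq> 1" and s0: "s \<noteq> 0" and mn: "m < n"
  shows "\<exists>\<gamma>. PP m n s \<gamma> \<noteq> 0"
proof -
  obtain n' where n: "n = Suc n'" using mn by (cases n) auto
  define A where "A = (\<lambda>t. if m = 0 then cpt (-1 + t) else W s (m - 1) t)"
  define F where "F = (\<lambda>t. cr (A t) (W s n' t))"
  have Acont: "isCont (\<lambda>t. fst (A t)) 0 \<and> isCont (\<lambda>t. snd (A t)) 0"
    unfolding A_def using W_cont by (cases "m = 0") (auto simp: cpt_def intro!: continuous_intros)
  have Fc: "isCont F 0" unfolding F_def cr_def using Acont W_cont
    by (auto intro!: continuous_intros)
  have F0: "F 0 \<noteq> 0"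
  proof -
    obtain \<kappa> where k: "\<kappa> \<noteq> 0" "W s n' 0 = (\<kappa> * s ^ (n'+1), \<kappa>)" using W_zero[OF s] by blast
    show ?thesis
    proof (cases "m = 0")
      case True
      have "F 0 = \<kappa> * (s ^ (n'+1) - 1)" unfolding F_def A_def cr_def using True k by (simp add: cpt_def algebra_simps)
      moreover have "s ^ (n'+1) \<noteq> 1" using s[of "n'+1"] by simp
      ultimately show ?thesis using k by simp
    next
      case False
      obtain \<kappa>' where k': "\<kappa>' \<noteq> 0" "W s (m-1) 0 = (\<kappa>' * s ^ (m-1+1), \<kappa>')" using W_zero[OF s] by blast
      have mm: "m - 1 + 1 = m" using False by simp
      have "F 0 = \<kappa>' * \<kappa> * (s ^ m - s ^ (n'+1))" unfolding F_def A_def cr_def using False k k' mm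
        by (simp add: algebra_simps)
      moreover have "s ^ m \<noteq> s ^ (n'+1)"
      proof
        assume h: "s ^ m = s ^ (n'+1)"
        have "s ^ (n'+1) = s ^ m * s ^ (n - m)" using mn n by (simp add: power_add[symmetric])
        hence "s ^ (n - m) = 1" using h s0 by simp
        thus False using s[of "n - m"] mn by simp
      qed
      ultimately show ?thesis using k k' by simp
    qed
  qed
  obtain d where d: "d > 0" "\<forall>t. cmod t < d \<longrightarrow> F t \<noteq> 0"
  proof -
    have "\<exists>d>0. \<forall>t. cmod (t - 0) < d \<longrightarrow> cmod (F t - F 0) < cmod (F 0)"
      using Fc F0 unfolding isCont_def LIM_eq
      by (metis diff_zero dist_norm dist_self norm_eq_zero norm_not_less_zero zero_less_norm_iff)
    then obtain d where "d > 0" "\<forall>t. cmod t < d \<longrightarrow> cmod (F t - F 0) < cmod (F 0)" by auto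
    moreover have "F t \<noteq> 0" if "cmod (F t - F 0) < cmod (F 0)" for t
      using that by (metis diff_0 norm_minus_cancel order_less_irrefl)
    ultimately show ?thesis using that by blast
  qed
  define t :: complex where "t = of_real (min d 1 / 2)"
  have t0: "t \<noteq> 0" unfolding t_def using d by simp
  have tc: "cmod t < d" unfolding t_def using d by (simp add: abs_of_pos)
  have t1: "1 + t \<noteq> 0"
  proof
    assume "1 + t = 0"
    hence "t = -1" by (simp add: eq_neg_iff_add_eq_0 add.commute)
    moreover have "Re t > 0" unfolding t_def using d by simp
    ultimately show False by simp
  qed
  have Ft: "F t \<noteq> 0" using d tc by blast
  have "PP m n s (-1 + t) = (if m = 0 then 1 else (t * (1 + t)) ^ (2^(m-1))) * (t * (1 + t)) ^ (2^n') * F t"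
  proof (cases "m = 0")
    case True
    show ?thesis unfolding PP_def n orb_W using True
      by (simp add: F_def A_def cr_sc orb_0)
  next
    case False
    then obtain m' where m': "m = Suc m'" by (cases m) auto
    show ?thesis unfolding PP_def
      by (simp add: F_def A_def cr_sc m' n orb_W')
  qed
  moreover have "t * (1 + t) \<noteq> 0" using t0 t1 by simp
  ultimately have "PP m n s (-1 + t) \<noteq> 0" using Ft by simp
  thus ?thesis by blast
qed



lemma lam_not_root:
  fixes \<theta> :: real
  assumes "\<theta> \<notin> \<rat>" and "i \<ge> (1::nat)"
  shows "exp (2 * of_real pi * \<i> * of_real \<theta>) ^ i \<noteq> 1"
proof
  assume h: "exp (2 * of_real pi * \<i> * of_real \<theta>) ^ i = 1"
  hence "exp (of_nat i * (2 * of_real pi * \<i> * of_real \<theta>)) = 1" by (simp add: exp_of_nat_mult)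
  then obtain k :: int where k: "Im (of_nat i * (2 * of_real pi * \<i> * of_real \<theta>)) = of_int (2 * k) * pi"
    unfolding exp_eq_1 by blast
  have "real i * (2 * pi * \<theta>) = of_int (2 * k) * pi" using k by simp
  hence "real i * \<theta> = of_int k" by (simp add: field_simps)
  hence "\<theta> = of_int k / real i" using assms(2) by (simp add: field_simps)
  hence "\<theta> \<in> \<rat>" by simp
  thus False using assms(1) by simp
qed

lemma fin_delta:
  fixes c :: complex
  assumes "finite R" and "\<forall>x\<in>R. \<exists>d>0. \<forall>s. cmod (s - c) < d \<longrightarrow> Q x s"
  shows "\<exists>d>0. \<forall>x\<in>R. \<forall>s. cmod (s - c) < d \<longrightarrow> Q x s"
  using assms
proof (induction R rule: finite_induct)
  case empty then show ?case by (intro exI[of _ 1]) auto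
next
  case (insert x F)
  then obtain d1 where d1: "d1 > 0" "\<forall>y\<in>F. \<forall>s. cmod (s - c) < d1 \<longrightarrow> Q y s" by auto
  obtain d2 where d2: "d2 > 0" "\<forall>s. cmod (s - c) < d2 \<longrightarrow> Q x s" using insert.prems by auto
  show ?case using d1 d2 by (intro exI[of _ "min d1 d2"]) auto
qed

theorem mainTheorem12:
  fixes \<theta> :: real and m n :: nat and \<epsilon> :: real
  assumes "0 < \<theta>" and "\<theta> < 1" and "\<theta> \<notin> \<rat>" and "m < n" and "\<epsilon> > 0"
  shows "\<exists>s::complex. 0 < cmod s \<and> cmod s < 1 \<and>
           (\<forall>g \<in> Z (exp (2 * of_real pi * \<i> * of_real \<theta>)) m n.
              \<exists>g' \<in> Z s m n. (SUP z. sdist (g' z) (g z)) < \<epsilon>)"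
proof -
  define lam where "lam = exp (2 * of_real pi * \<i> * of_real \<theta>)"
  have lam0: "lam \<noteq> 0" unfolding lam_def by simp
  have lam1: "cmod lam = 1" unfolding lam_def by simp
  have lroot: "\<And>i. i \<ge> 1 \<Longrightarrow> lam ^ i \<noteq> 1" unfolding lam_def using lam_not_root[OF assms(3)] by blast
  define F where "F = (\<lambda>s. PP m n [:s:] [:0::complex, 1:])"
  have CCF: "CC F" unfolding F_def by (rule CC_PP)
  then obtain D where D: "\<And>s. degree (F s) \<le> D" unfolding CC_def by blast
  have Fc: "isCont (\<lambda>s. coeff (F s) i) x" for i x
    using CCF unfolding CC_def using continuous_on_eq_continuous_at[of UNIV] by blast
  have Fe: "poly (F s) x = PP m n s x" for s x unfolding F_def by (rule PP_hom)
  obtain gs where "PP m n lam gs \<noteq> 0" using PP_nonzero[OF lroot lam0 assms(4)] by blast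
  hence Fnz: "F lam \<noteq> 0" using Fe by (metis poly_0)
  define R where "R = {\<gamma>. poly (F lam) \<gamma> = 0 \<and> nondeg lam \<gamma>}"
  have finR: "finite R" unfolding R_def using poly_roots_finite[OF Fnz] by (rule finite_subset[rotated]) auto
  define Q where "Q = (\<lambda>\<gamma>0 s. \<exists>\<gamma>. PP m n s \<gamma> = 0 \<and> nondeg s \<gamma> \<and> (\<forall>z. sdist (gm s \<gamma> z) (gm lam \<gamma>0 z) \<le> \<epsilon>/2))"
  have loc: "\<exists>d>0. \<forall>s. cmod (s - lam) < d \<longrightarrow> Q \<gamma>0 s" if g0: "\<gamma>0 \<in> R" for \<gamma>0
  proof -
    have nd0: "nondeg lam \<gamma>0" and r0: "poly (F lam) \<gamma>0 = 0" using g0 unfolding R_def by auto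
    obtain \<rho> where rho: "\<rho> > 0" "\<forall>s g. cmod (s - lam) < \<rho> \<and> cmod (g - \<gamma>0) < \<rho> \<longrightarrow>
            nondeg s g \<and> (\<forall>z. sdist (gm s g z) (gm lam \<gamma>0 z) \<le> \<epsilon>/2)"
      using close[OF nd0, of "\<epsilon>/2"] assms(5) by auto
    obtain d where d: "d > 0" "\<forall>s. cmod (s - lam) < d \<longrightarrow> (\<exists>z. cmod (z - \<gamma>0) < \<rho> \<and> poly (F s) z = 0)"
      using root_cont[OF Fc D Fnz r0 rho(1)] by blast
    show ?thesis
    proof (intro exI[of _ "min d \<rho>"] conjI allI impI)
      show "min d \<rho> > 0" using d rho by simp
      fix s assume s: "cmod (s - lam) < min d \<rho>"
      then obtain z where z: "cmod (z - \<gamma>0) < \<rho>" "poly (F s) z = 0" using d by auto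
      show "Q \<gamma>0 s" unfolding Q_def
        using rho(2)[rule_format, of s z] s z Fe by auto
    qed
  qed
  obtain d where d: "d > 0" "\<forall>\<gamma>0\<in>R. \<forall>s. cmod (s - lam) < d \<longrightarrow> Q \<gamma>0 s"
    using fin_delta[OF finR, of lam Q] loc by blast
  define d' where "d' = min d 1"
  have d': "0 < d'" "d' \<le> 1" "d' \<le> d" unfolding d'_def using d by auto
  define s where "s = of_real (1 - d'/2) * lam"
  have ns: "cmod s = 1 - d'/2"
  proof -
    have "cmod s = \<bar>1 - d'/2\<bar> * cmod lam" unfolding s_def norm_mult norm_of_real ..
    thus ?thesis using d' lam1 by simp
  qed
  have sl: "cmod (s - lam) < d"
  proof -
    have "s - lam = of_real (- d'/2) * lam" unfolding s_def by (simp add: algebra_simps)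
    hence "cmod (s - lam) = d'/2" using d' lam1 by (simp add: norm_mult)
    thus ?thesis using d' by simp
  qed
  show ?thesis
  proof (intro exI[of _ s] conjI ballI)
    show "0 < cmod s" "cmod s < 1" using ns d' by auto
    fix g assume gZ: "g \<in> Z (exp (2 * of_real pi * \<i> * of_real \<theta>)) m n"
    then obtain \<gamma>0 where g0: "nondeg lam \<gamma>0" "g = gm lam \<gamma>0" "PP m n lam \<gamma>0 = 0"
      using Z_form[OF lam0] unfolding lam_def by blast
    have "\<gamma>0 \<in> R" unfolding R_def using g0 Fe by auto
    then obtain \<gamma> where \<gamma>: "PP m n s \<gamma> = 0" "nondeg s \<gamma>" "\<forall>z. sdist (gm s \<gamma> z) (gm lam \<gamma>0 z) \<le> \<epsilon>/2"
      using d sl unfolding Q_def by blast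
    show "\<exists>g'\<in>Z s m n. (SUP z. sdist (g' z) (g z)) < \<epsilon>"
    proof (intro bexI[of _ "gm s \<gamma>"])
      show "gm s \<gamma> \<in> Z s m n" using gm_in_Z \<gamma> by blast
      have "(SUP z. sdist (gm s \<gamma> z) (g z)) \<le> \<epsilon>/2"
        using \<gamma>(3) g0(2) by (intro cSUP_least) auto
      thus "(SUP z. sdist (gm s \<gamma> z) (g z)) < \<epsilon>" using assms(5) by simp
    qed
  qed
qed

end
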